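(* For all $k,l\ge1$ and every $X\in\mathfrak{W}'_k$, the operator $(\lambda(X)-X)L_{z_l}$ on $\mathfrak{H}^1$ belongs to $\mathfrak{W}'_{k+l}$.
   Context: Let $\mathfrak{H}=\mathbb{Q}\langle x,y\rangle$, $\mathfrak{H}^1=\mathbb{Q}+\mathfrak{H}y$, $\mathfrak{H}^1_n$ its homogeneous part of degree $n$; $L_w(w')=ww'$; products of operators denote composition. Let $z_k=x^{k-1}y$. The harmonic product $\ast$ on $\mathfrak{H}^1$ is the $\mathbb{Q}$-bilinear map with $1\ast w=w\ast1=w$ and $z_kw\ast z_lw'=z_k(w\ast z_lw')+z_l(z_kw\ast w')+z_{k+l}(w\ast w')$; $\mathcal{H}_w(v)=w\ast v$. $\mathfrak{W}$ is the $\mathbb{Q}$-span of the operators $\mathcal{H}_w$ ($w\in\mathfrak{H}^1$) on $\mathfrak{H}^1$; $\mathfrak{W}'$ (resp. $\mathfrak{W}'_n$) the $\mathbb{Q}$-span of the operators $L_{z_k}\mathcal{H}_w$ on $\mathfrak{H}^1$ with $k\ge1$, $w\in\mathfrak{H}^1$ (resp. $1\le k\le n$, $w\in\mathfrak{H}^1_{n-k}$). The $L_{z_k}\mathcal{H}_w$ over distinct pairs $(k,w)$, $w$ a word, are linearly independent, and $\lambda:\mathfrak{W}'\to\mathfrak{W}$ is the $\mathbb{Q}$-linear map with $\lambda(L_{z_k}\mathcal{H}_w)=\mathcal{H}_{z_kw}$. *)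

theory Defs
  imports Complex_Main "HOL-Library.Poly_Mapping"
begin

text \<open>The algebra H^1 = Q + H y is the free Q-algebra on the letters
  z_k = x^(k-1) y (k \<ge> 1).  A word of H^1 is encoded as a list of naturals, the
  entry n standing for the letter z_(n+1); an element of H^1 is a finitely
  supported Q-valued function on such lists.\<close>

type_synonym word = "nat list"
type_synonym H1 = "word \<Rightarrow>\<^sub>0 rat"

text \<open>weight (= degree in x,y) of a word: z_k has degree k\<close>
definition wt :: "word \<Rightarrow> nat" where
  "wt w = sum_list (map Suc w)"

definition Hdeg :: "nat \<Rightarrow> H1 set" where
  "Hdeg n = {p. \<forall>w\<in>Poly_Mapping.keys p. wt w = n}"

definition smul :: "rat \<Rightarrow> H1 \<Rightarrow> H1" where
  "smul c p = Poly_Mapping.map (\<lambda>a. c * a) p"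

text \<open>left multiplication by the letter with code a (i.e. by z_(a+1))\<close>
lift_definition lcons :: "nat \<Rightarrow> H1 \<Rightarrow> H1" is
  "\<lambda>a f w. case w of [] \<Rightarrow> 0 | b # u \<Rightarrow> (if b = a then f u else 0)"
proof -
  fix a :: nat and f :: "word \<Rightarrow> rat"
  assume fin: "finite {x. f x \<noteq> 0}"
  have "{w. (case w of [] \<Rightarrow> 0 | b # u \<Rightarrow> (if b = a then f u else 0)) \<noteq> 0}
        \<subseteq> (Cons a) ` {x. f x \<noteq> 0}"
    by (auto simp: neq_Nil_conv split: list.splits if_splits)
  then show "finite {w. (case w of [] \<Rightarrow> 0 | b # u \<Rightarrow> (if b = a then f u else 0)) \<noteq> (0::rat)}"
    using fin by (rule finite_subset[OF _ finite_imageI])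
qed

definition Lz :: "nat \<Rightarrow> H1 \<Rightarrow> H1" where
  "Lz k p = lcons (k - 1) p"

text \<open>harmonic product of two words:
  z_k u * z_l v = z_k (u * z_l v) + z_l (z_k u * v) + z_(k+l) (u * v)\<close>
function hw :: "word \<Rightarrow> word \<Rightarrow> H1" where
  "hw [] v = Poly_Mapping.single v 1"
| "hw (a # u) [] = Poly_Mapping.single (a # u) 1"
| "hw (a # u) (b # v) =
     lcons a (hw u (b # v)) + lcons b (hw (a # u) v) + lcons (a + b + 1) (hw u v)"
  by pat_completeness auto
termination by (relation "measure (\<lambda>(u, v). length u + length v)") auto

definition harm :: "H1 \<Rightarrow> H1 \<Rightarrow> H1" where
  "harm p q = (\<Sum>u\<in>Poly_Mapping.keys p. \<Sum>v\<in>Poly_Mapping.keys q. smul (Poly_Mapping.lookup p u * Poly_Mapping.lookup q v) (hw u v))"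

definition Hop :: "H1 \<Rightarrow> H1 \<Rightarrow> H1" where
  "Hop w = (\<lambda>v. harm w v)"

definition gensum :: "nat \<Rightarrow> (nat \<Rightarrow> rat) \<Rightarrow> (nat \<Rightarrow> nat) \<Rightarrow> (nat \<Rightarrow> H1) \<Rightarrow> (H1 \<Rightarrow> H1)" where
  "gensum m c ks ws = (\<lambda>v. \<Sum>i<m. smul (c i) (Lz (ks i) (Hop (ws i) v)))"

text \<open>its image under lambda: sum_(i<m) c_i H_(z_(ks i) ws i)\<close>
definition lamsum :: "nat \<Rightarrow> (nat \<Rightarrow> rat) \<Rightarrow> (nat \<Rightarrow> nat) \<Rightarrow> (nat \<Rightarrow> H1) \<Rightarrow> (H1 \<Rightarrow> H1)" where
  "lamsum m c ks ws = (\<lambda>v. \<Sum>i<m. smul (c i) (Hop (Lz (ks i) (ws i)) v))"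

definition Wp :: "nat \<Rightarrow> (H1 \<Rightarrow> H1) set" where
  "Wp n = {X. \<exists>m c ks ws. (\<forall>i<m. 1 \<le> ks i \<and> ks i \<le> n \<and> ws i \<in> Hdeg (n - ks i))
                          \<and> X = gensum m c ks ws}"

end

theory Submission
  imports Defs
begin

lemma lookup_smul[simp]: "Poly_Mapping.lookup (smul c p) w = c * Poly_Mapping.lookup p w"
  by (simp add: smul_def map.rep_eq when_def)

lemma lookup_lcons: "Poly_Mapping.lookup (lcons a p) w = (case w of [] \<Rightarrow> 0 | b # u \<Rightarrow> (if b = a then Poly_Mapping.lookup p u else 0))"
  by (simp add: lcons.rep_eq)

lemma lookup_lcons_Cons[simp]: "Poly_Mapping.lookup (lcons a p) (a # u) = Poly_Mapping.lookup p u"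
  by (simp add: lookup_lcons)

lemma keys_lcons: "Poly_Mapping.keys (lcons a p) = Cons a ` Poly_Mapping.keys p"
  by (auto simp: Poly_Mapping.in_keys_iff lookup_lcons split: list.splits if_splits)

lemma lcons_add: "lcons a (x + y) = lcons a x + lcons a y"
  by (rule Poly_Mapping.poly_mapping_eqI) (simp add: Poly_Mapping.lookup_add lookup_lcons split: list.splits)

lemma lcons_zero: "lcons a 0 = 0"
  by (rule Poly_Mapping.poly_mapping_eqI) (simp add: lookup_lcons split: list.splits)

lemma lcons_sum: "lcons a (sum f A) = (\<Sum>x\<in>A. lcons a (f x))"
  by (induction A rule: infinite_finite_induct) (auto simp: lcons_zero lcons_add)

lemma lcons_smul: "lcons a (smul c x) = smul c (lcons a x)"
  by (rule Poly_Mapping.poly_mapping_eqI) (simp add: lookup_lcons split: list.splits)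

lemma smul_add: "smul c (x + y) = smul c x + smul c y"
  by (rule Poly_Mapping.poly_mapping_eqI) (simp add: Poly_Mapping.lookup_add algebra_simps)

lemma smul_diff: "smul c (x - y) = smul c x - smul c y"
  by (rule Poly_Mapping.poly_mapping_eqI) (simp add: Poly_Mapping.lookup_minus algebra_simps)

lemma harm_lcons_left: "harm (lcons a p) q =
   (\<Sum>u\<in>Poly_Mapping.keys p. \<Sum>v\<in>Poly_Mapping.keys q. smul (Poly_Mapping.lookup p u * Poly_Mapping.lookup q v) (hw (a # u) v))"
  unfolding harm_def keys_lcons
  by (subst sum.reindex) (auto simp: inj_on_def)

lemma harm_lcons_right: "harm p (lcons b q) =
   (\<Sum>u\<in>Poly_Mapping.keys p. \<Sum>v\<in>Poly_Mapping.keys q. smul (Poly_Mapping.lookup p u * Poly_Mapping.lookup q v) (hw u (b # v)))"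
  unfolding harm_def keys_lcons
  by (subst sum.reindex) (auto simp: inj_on_def)

lemma harm_lcons_both: "harm (lcons a p) (lcons b q) =
   lcons a (harm p (lcons b q)) + lcons b (harm (lcons a p) q) + lcons (a + b + 1) (harm p q)"
proof -
  have "harm (lcons a p) (lcons b q) =
   (\<Sum>u\<in>Poly_Mapping.keys p. \<Sum>v\<in>Poly_Mapping.keys q. smul (Poly_Mapping.lookup p u * Poly_Mapping.lookup q v) (hw (a # u) (b # v)))"
    unfolding harm_def keys_lcons
    by (subst sum.reindex) (auto simp: inj_on_def sum.reindex)
  also have "\<dots> = (\<Sum>u\<in>Poly_Mapping.keys p. \<Sum>v\<in>Poly_Mapping.keys q. lcons a (smul (Poly_Mapping.lookup p u * Poly_Mapping.lookup q v) (hw u (b # v))))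
     + (\<Sum>u\<in>Poly_Mapping.keys p. \<Sum>v\<in>Poly_Mapping.keys q. lcons b (smul (Poly_Mapping.lookup p u * Poly_Mapping.lookup q v) (hw (a # u) v)))
     + (\<Sum>u\<in>Poly_Mapping.keys p. \<Sum>v\<in>Poly_Mapping.keys q. lcons (a + b + 1) (smul (Poly_Mapping.lookup p u * Poly_Mapping.lookup q v) (hw u v)))"
    by (simp add: smul_add lcons_smul sum.distrib)
  also have "\<dots> = lcons a (harm p (lcons b q)) + lcons b (harm (lcons a p) q) + lcons (a + b + 1) (harm p q)"
    unfolding harm_lcons_left harm_lcons_right by (simp add: harm_def lcons_sum)
  finally show ?thesis .
qed

lemma harm_Lz: "1 \<le> a \<Longrightarrow> 1 \<le> l \<Longrightarrow>
  harm (Lz a p) (Lz l v) - Lz a (harm p (Lz l v)) = Lz l (harm (Lz a p) v) + Lz (a + l) (harm p v)"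
proof -
  assume "1 \<le> a" "1 \<le> l"
  then obtain a' l' where "a = Suc a'" "l = Suc l'" by (metis Suc_le_D One_nat_def)
  then show ?thesis unfolding Lz_def
    using harm_lcons_both[of a' p l' v] by (simp add: algebra_simps)
qed

lemma sum_split: fixes f :: "nat \<Rightarrow> 'a::comm_monoid_add" shows "(\<Sum>i<m + n. (f i :: 'a::comm_monoid_add)) = (\<Sum>i<m. f i) + (\<Sum>i<n. f (m + i))"
  by (induction n) (simp_all add: add.assoc)

lemma Lz_Hdeg: "1 \<le> a \<Longrightarrow> a \<le> k \<Longrightarrow> w \<in> Hdeg (k - a) \<Longrightarrow> Lz a w \<in> Hdeg k"
  unfolding Hdeg_def Lz_def by (auto simp: wt_def keys_lcons)

theorem mainTheorem12:
  fixes k l m :: nat and c :: "nat \<Rightarrow> rat" and ks :: "nat \<Rightarrow> nat" and ws :: "nat \<Rightarrow> H1"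
    and X :: "H1 \<Rightarrow> H1"
  assumes "1 \<le> k" and "1 \<le> l"
    and rep: "\<forall>i<m. 1 \<le> ks i \<and> ks i \<le> k \<and> ws i \<in> Hdeg (k - ks i)"
    and X: "X = gensum m c ks ws"
  shows "(\<lambda>v. lamsum m c ks ws (Lz l v) - X (Lz l v)) \<in> Wp (k + l)"
proof -
  define c' where "c' = (\<lambda>i. if i < m then c i else c (i - m))"
  define ks' where "ks' = (\<lambda>i. if i < m then l else ks (i - m) + l)"
  define ws' where "ws' = (\<lambda>i. if i < m then Lz (ks i) (ws i) else ws (i - m))"
  have cond: "\<forall>i<m+m. 1 \<le> ks' i \<and> ks' i \<le> k + l \<and> ws' i \<in> Hdeg (k + l - ks' i)"
  proof (intro allI impI)
    fix i assume i: "i < m + m"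
    show "1 \<le> ks' i \<and> ks' i \<le> k + l \<and> ws' i \<in> Hdeg (k + l - ks' i)"
    proof (cases "i < m")
      case True
      then show ?thesis using rep \<open>1 \<le> l\<close> \<open>1 \<le> k\<close> Lz_Hdeg[of "ks i" k "ws i"]
        by (simp add: ks'_def ws'_def)
    next
      case False
      then have "i - m < m" using i by simp
      then show ?thesis using rep \<open>1 \<le> l\<close> False
        by (simp add: ks'_def ws'_def)
    qed
  qed
  have eq: "(\<lambda>v. lamsum m c ks ws (Lz l v) - X (Lz l v)) = gensum (m + m) c' ks' ws'"
  proof
    fix v
    have "lamsum m c ks ws (Lz l v) - X (Lz l v) =
      (\<Sum>i<m. smul (c i) (harm (Lz (ks i) (ws i)) (Lz l v) - Lz (ks i) (harm (ws i) (Lz l v))))"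
      unfolding X lamsum_def gensum_def Hop_def
      by (simp add: smul_diff sum_subtractf)
    also have "\<dots> = (\<Sum>i<m. smul (c i) (Lz l (harm (Lz (ks i) (ws i)) v)) + smul (c i) (Lz (ks i + l) (harm (ws i) v)))"
      by (rule sum.cong) (use rep \<open>1 \<le> l\<close> in \<open>auto simp: harm_Lz smul_add\<close>)
    also have "\<dots> = gensum (m + m) c' ks' ws' v"
      unfolding gensum_def sum_split Hop_def
      by (simp add: c'_def ks'_def ws'_def sum.distrib)
    finally show "lamsum m c ks ws (Lz l v) - X (Lz l v) = gensum (m + m) c' ks' ws' v" .
  qed
  show ?thesis unfolding Wp_def eq using cond by blast
qed

end
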